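(* Let $M\ge 2$ and $N$ be positive integers, and let $C_0,\dots,C_{N-1}$ be i.i.d. random variables, each uniformly distributed on $\{0,1,\dots,M-1\}$. Define the random matrix $\bm\Psi=[\bm\Psi_0,\bm\Psi_1,\dots,\bm\Psi_{N-1}]\in\mathbb{C}^{N\times MN}$, where $\bm\Psi_q=[\bm\psi_{0,q},\dots,\bm\psi_{M-1,q}]\in\mathbb{C}^{N\times M}$ and the $n$-th entry ($n=0,\dots,N-1$) of the column $\bm\psi_{p,q}$ is $[\bm\psi_{p,q}]_n=\frac{1}{\sqrt N}e^{j\frac{2\pi p}{M}C_n+j\frac{2\pi q}{N}n}$. Define the intra-block coherence $\mu_I=\max_{q}\|\bm\Psi_q^H\bm\Psi_q-\bm I_M\|_s$ and the inter-block coherence $\mu_B=\max_{q_1\neq q_2}\|\bm\Psi_{q_1}^H\bm\Psi_{q_2}\|_s$ (maxima over $q,q_1,q_2\in\{0,\dots,N-1\}$), where $\|\cdot\|_s$ is the spectral norm. Then for any constant $\epsilon>0$ and sufficiently large $N$, the inequality $$17\sqrt{\frac{K\log(MN)(1+\mu_I)}{N}}\,\|\bm\Psi\|_s+48\mu_B\log(MN)+\frac{2K}{N}\|\bm\Psi\|_s^2+3\mu_I\le\frac14$$ holds with probability at least $1-\epsilon$ (with respect to the random choice of $C_0,\dots,C_{N-1}$) whenever the positive integer $K$ satisfies $$K\le\frac{N\left(\frac18-\delta_1-\delta_2\right)^2}{81\,M\log(MN)\,(1+2\delta_2/3)},$$ where $\delta_1:=24\sqrt{\frac{M-1}{N}}\log(MN)\left(2\sqrt{\log(MN)-\log\epsilon}+1\right)$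 and $\delta_2:=\frac32\sqrt{\frac{M-1}{N}}\left(2\sqrt{\log(2M)-\log\epsilon}+1\right)$.
   Context: $j$ denotes the imaginary unit, $\log$ is the natural logarithm, $(\cdot)^H$ is conjugate transpose, $\bm I_M$ is the $M\times M$ identity, and $\|\bm A\|_s$ is the largest singular value of $\bm A$. The model is that of a randomized stepped frequency radar with $N$ pulses and $M$ carrier frequencies, under the simplification that Doppler-shift differences across carrier frequencies are neglected (so the entries of $\bm\psi_{p,q}$ are exactly as given). *)

theory Defs
  imports Complex_Main "HOL-Library.FuncSet"
begin

definition spec_norm :: "nat \<Rightarrow> nat \<Rightarrow> (nat \<Rightarrow> nat \<Rightarrow> complex) \<Rightarrow> real" where
  "spec_norm m n A = Sup {sqrt (\<Sum>i<m. (cmod (\<Sum>k<n. A i k * v k))\<^sup>2) | v.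
       (\<Sum>k<n. (cmod (v k))\<^sup>2) = 1}"

definition psi :: "nat \<Rightarrow> nat \<Rightarrow> (nat \<Rightarrow> nat) \<Rightarrow> nat \<Rightarrow> nat \<Rightarrow> nat \<Rightarrow> complex" where
  "psi M N C p q n = exp (\<i> * complex_of_real (2 * pi * real p / real M * real (C n))
                        + \<i> * complex_of_real (2 * pi * real q / real N * real n))
                    / complex_of_real (sqrt (real N))"

definition Psi :: "nat \<Rightarrow> nat \<Rightarrow> (nat \<Rightarrow> nat) \<Rightarrow> nat \<Rightarrow> nat \<Rightarrow> complex" where
  "Psi M N C n col = psi M N C (col mod M) (col div M) n"

definition gram :: "nat \<Rightarrow> nat \<Rightarrow> (nat \<Rightarrow> nat) \<Rightarrow> nat \<Rightarrow> nat \<Rightarrow> nat \<Rightarrow> nat \<Rightarrow> complex" where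
  "gram M N C q1 q2 a b = (\<Sum>n<N. cnj (psi M N C a q1 n) * psi M N C b q2 n)"

definition mu_I :: "nat \<Rightarrow> nat \<Rightarrow> (nat \<Rightarrow> nat) \<Rightarrow> real" where
  "mu_I M N C = Max ((\<lambda>q. spec_norm M M (\<lambda>a b. gram M N C q q a b - (if a = b then 1 else 0))) ` {..<N})"

definition mu_B :: "nat \<Rightarrow> nat \<Rightarrow> (nat \<Rightarrow> nat) \<Rightarrow> real" where
  "mu_B M N C = Max {spec_norm M M (gram M N C q1 q2) | q1 q2. q1 < N \<and> q2 < N \<and> q1 \<noteq> q2}"

text \<open>Probability of event P when C_0..C_{N-1} are i.i.d. uniform on {0..M-1}
  (i.e. C uniform on the finite product space).\<close>
definition unif_prob :: "nat \<Rightarrow> nat \<Rightarrow> ((nat \<Rightarrow> nat) \<Rightarrow> bool) \<Rightarrow> real" where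
  "unif_prob M N P = real (card {C \<in> PiE {..<N} (\<lambda>_. {..<M}). P C}) / real M ^ N"

end

theory Submission
  imports Defs "HOL-Probability.Hoeffding" "HOL-Real_Asymp.Real_Asymp"
begin

lemma cosh_le_exp_sq:
  fixes l :: real assumes "l \<ge> 0"
  shows "(exp l + exp (-l)) / 2 \<le> exp (l\<^sup>2 / 2)"
proof -
  have "-(2*l) * (1/2) + ln (1 + (1/2) * (exp (2*l) - 1)) \<le> (2*l)\<^sup>2 / 8"
    using Hoeffdings_lemma_aux[of "2*l" "1/2"] assms by simp
  hence "ln ((1 + exp (2*l)) / 2) \<le> l + l\<^sup>2/2"
    by (simp add: power2_eq_square field_simps)
  hence "(1 + exp (2*l)) / 2 \<le> exp (l + l\<^sup>2/2)"
    by (metis add_pos_pos divide_pos_pos exp_gt_zero exp_le_cancel_iff exp_ln zero_less_one zero_less_numeral)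
  hence "(1 + exp (2*l)) / 2 * exp (-l) \<le> exp (l + l\<^sup>2/2) * exp (-l)"
    by (intro mult_right_mono) auto
  moreover have "(1 + exp (2*l)) / 2 * exp (-l) = (exp l + exp (-l)) / 2"
    by (simp add: field_simps flip: exp_add)
  moreover have "exp (l + l\<^sup>2/2) * exp (-l) = exp (l\<^sup>2 / 2)"
    by (simp flip: exp_add)
  ultimately show ?thesis by simp
qed

lemma exp_convex_bound:
  fixes l x :: real assumes "l \<ge> 0" "\<bar>x\<bar> \<le> 1"
  shows "exp (l * x) \<le> (1 + x) / 2 * exp l + (1 - x) / 2 * exp (-l)"
proof -
  define t where "t = (1 - x) / 2"
  have t: "0 \<le> t" "t \<le> 1" using assms by (auto simp: t_def)
  have "exp (l * ((1 - t) * 1 + t * (-1))) \<le> (1 - t) * exp (l * 1) + t * exp (l * (-1))"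
    using convex_onD[OF convex_on_exp[OF assms(1)] t, where x=1 and y="-1"] by simp
  moreover have e1: "(1 - t) * 1 + t * (-1) = x" by (simp add: t_def field_simps)
  moreover have e2: "1 - t = (1 + x) / 2" by (simp add: t_def field_simps)
  ultimately show ?thesis unfolding e1 e2 by (simp add: t_def)
qed

lemma chernoff_count:
  fixes f :: "nat \<Rightarrow> nat \<Rightarrow> real" and s :: real
  assumes N: "N > 0" and M: "M > 0"
    and bnd: "\<And>n c. n < N \<Longrightarrow> c < M \<Longrightarrow> \<bar>f n c\<bar> \<le> 1"
    and mean: "\<And>n. n < N \<Longrightarrow> (\<Sum>c<M. f n c) = 0"
    and s: "s \<ge> 0"
  shows "real (card {C \<in> PiE {..<N} (\<lambda>_. {..<M}). s \<le> (\<Sum>n<N. f n (C n))})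
          \<le> real M ^ N * exp (-(s\<^sup>2) / (2 * real N))"
proof -
  define l where "l = s / real N"
  have l0: "l \<ge> 0" using s N by (simp add: l_def)
  define A where "A = PiE {..<N} (\<lambda>_. {..<M::nat})"
  define E where "E = {C \<in> A. s \<le> (\<Sum>n<N. f n (C n))}"
  have finA: "finite A" unfolding A_def by (simp add: finite_PiE)
  have EA: "E \<subseteq> A" by (auto simp: E_def)
  have "real (card E) = (\<Sum>C\<in>E. 1)" by simp
  also have "\<dots> \<le> (\<Sum>C\<in>E. exp (l * (\<Sum>n<N. f n (C n)) - l * s))"
  proof (rule sum_mono)
    fix C assume "C \<in> E"
    hence "l * s \<le> l * (\<Sum>n<N. f n (C n))" using l0 by (auto simp: E_def intro: mult_left_mono)
    thus "1 \<le> exp (l * (\<Sum>n<N. f n (C n)) - l * s)" by simp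
  qed
  also have "\<dots> \<le> (\<Sum>C\<in>A. exp (l * (\<Sum>n<N. f n (C n)) - l * s))"
    by (rule sum_mono2[OF finA EA]) auto
  also have "\<dots> = exp (- l * s) * (\<Sum>C\<in>A. \<Prod>n<N. exp (l * f n (C n)))"
  proof -
    have "exp (l * (\<Sum>n<N. f n (C n)) - l * s) = exp (- l * s) * (\<Prod>n<N. exp (l * f n (C n)))" for C
    proof -
      have "exp (l * (\<Sum>n<N. f n (C n)) - l * s) = exp (- l * s + (\<Sum>n<N. l * f n (C n)))"
        by (simp add: sum_distrib_left)
      also have "\<dots> = exp (- l * s) * exp (\<Sum>n<N. l * f n (C n))" by (rule exp_add)
      also have "exp (\<Sum>n<N. l * f n (C n)) = (\<Prod>n<N. exp (l * f n (C n)))" by (rule exp_sum) simp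
      finally show ?thesis .
    qed
    thus ?thesis by (simp add: sum_distrib_left)
  qed
  also have "(\<Sum>C\<in>A. \<Prod>n<N. exp (l * f n (C n))) = (\<Prod>n<N. \<Sum>c<M. exp (l * f n c))"
    unfolding A_def by (rule prod_sum_PiE[symmetric]) auto
  also have "\<dots> \<le> (\<Prod>n<N. real M * exp (l\<^sup>2 / 2))"
  proof (rule prod_mono)
    fix n assume n: "n \<in> {..<N}"
    have "(\<Sum>c<M. exp (l * f n c)) \<le> (\<Sum>c<M. (1 + f n c) / 2 * exp l + (1 - f n c) / 2 * exp (-l))"
      using n by (intro sum_mono exp_convex_bound l0 bnd) auto
    also have "\<dots> = real M * ((exp l + exp (-l)) / 2) + (\<Sum>c<M. f n c) * ((exp l - exp (-l)) / 2)"
    proof -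
      have "\<And>c. (1 + f n c) / 2 * exp l + (1 - f n c) / 2 * exp (-l)
            = (exp l + exp (-l)) / 2 + f n c * ((exp l - exp (-l)) / 2)"
        by (simp add: field_simps)
      hence "(\<Sum>c<M. (1 + f n c) / 2 * exp l + (1 - f n c) / 2 * exp (-l))
           = (\<Sum>c<M. (exp l + exp (-l)) / 2 + f n c * ((exp l - exp (-l)) / 2))" by simp
      also have "\<dots> = real M * ((exp l + exp (-l)) / 2) + (\<Sum>c<M. f n c) * ((exp l - exp (-l)) / 2)"
        by (simp add: sum.distrib sum_distrib_right)
      finally show ?thesis .
    qed
    also have "\<dots> = real M * ((exp l + exp (-l)) / 2)" using mean n by simp
    also have "\<dots> \<le> real M * exp (l\<^sup>2 / 2)"
      by (intro mult_left_mono cosh_le_exp_sq l0) auto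
    finally show "0 \<le> (\<Sum>c<M. exp (l * f n c)) \<and> (\<Sum>c<M. exp (l * f n c)) \<le> real M * exp (l\<^sup>2 / 2)"
      by (auto intro: sum_nonneg)
  qed
  also have "(\<Prod>n<N. real M * exp (l\<^sup>2 / 2)) = real M ^ N * exp (real N * (l\<^sup>2 / 2))"
    by (simp add: power_mult_distrib exp_of_nat_mult[symmetric])
  finally have "real (card E) \<le> exp (- l * s) * (real M ^ N * exp (real N * (l\<^sup>2 / 2)))"
    by (simp add: mult_left_mono)
  also have "\<dots> = real M ^ N * exp (- l * s + real N * (l\<^sup>2 / 2))"
    by (simp only: exp_add mult_ac)
  also have "- l * s + real N * (l\<^sup>2 / 2) = -(s\<^sup>2) / (2 * real N)"
    using N by (simp add: l_def power2_eq_square field_simps)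
  finally show ?thesis by (simp add: E_def A_def)
qed

lemma sum_root_unity:
  fixes k :: int assumes m: "m > 0"
  shows "(\<Sum>c<m. exp (\<i> * complex_of_real (2*pi*real_of_int k * real c / real m)))
         = (if int m dvd k then of_nat m else 0)"
proof (cases "int m dvd k")
  case True
  then obtain j where j: "k = int m * j" by blast
  have "exp (\<i> * complex_of_real (2*pi*real_of_int k * real c / real m)) = 1" for c
  proof -
    have "2*pi*real_of_int k * real c / real m = 2 * pi * real_of_int (j * int c)"
      using m by (simp add: j field_simps)
    hence "exp (\<i> * complex_of_real (2*pi*real_of_int k * real c / real m))
          = cis (2 * pi * real_of_int (j * int c))" by (simp add: cis_conv_exp mult.commute)
    also have "\<dots> = 1" by (rule cis_multiple_2pi) simp
    finally show ?thesis .
  qed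
  thus ?thesis using True by simp
next
  case False
  define z where "z = exp (\<i> * complex_of_real (2*pi*real_of_int k / real m))"
  have zterm: "exp (\<i> * complex_of_real (2*pi*real_of_int k * real c / real m)) = z ^ c" for c
  proof -
    have "\<i> * complex_of_real (2*pi*real_of_int k * real c / real m)
          = of_nat c * (\<i> * complex_of_real (2*pi*real_of_int k / real m))"
      by (simp add: field_simps)
    thus ?thesis unfolding z_def by (metis exp_of_nat_mult)
  qed
  have z1: "z \<noteq> 1"
  proof
    assume "z = 1"
    then obtain n :: int where n: "2*pi*real_of_int k / real m = of_int (2*n) * pi"
      by (auto simp: z_def exp_eq_1)
    hence "real_of_int k = real_of_int (n * int m)" using m by (simp add: field_simps)
    hence "k = n * int m" by linarith
    thus False using False by simp
  qed
  have zm: "z ^ m = 1"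
  proof -
    have "z ^ m = exp (of_nat m * (\<i> * complex_of_real (2*pi*real_of_int k / real m)))"
      unfolding z_def by (rule exp_of_nat_mult[symmetric])
    also have "of_nat m * (\<i> * complex_of_real (2*pi*real_of_int k / real m))
        = \<i> * complex_of_real (2 * pi * real_of_int k)" using m by (simp add: field_simps)
    also have "exp \<dots> = cis (2 * pi * real_of_int k)" by (simp add: cis_conv_exp)
    also have "\<dots> = 1" by (rule cis_multiple_2pi) simp
    finally show ?thesis .
  qed
  have "(\<Sum>c<m. z ^ c) = 0" using geometric_sum[OF z1, of m] zm by simp
  thus ?thesis using False unfolding zterm by simp
qed

lemma parseval:
  fixes x :: "nat \<Rightarrow> complex" assumes N: "N > 0"
  shows "(\<Sum>n<N. (cmod (\<Sum>q<N. exp (\<i> * complex_of_real (2*pi*real q/real N*real n)) * x q))\<^sup>2)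
         = real N * (\<Sum>q<N. (cmod (x q))\<^sup>2)"
proof -
  define E where "E q n = exp (\<i> * complex_of_real (2*pi*real q/real N*real n))" for q n :: nat
  have EE: "E q n * cnj (E q' n) = exp (\<i> * complex_of_real (2*pi*real_of_int (int q - int q') * real n / real N))"
    for q q' n
  proof -
    have "E q n * cnj (E q' n) = exp (\<i> * complex_of_real (2*pi*real q/real N*real n))
             * exp (cnj (\<i> * complex_of_real (2*pi*real q'/real N*real n)))"
      unfolding E_def exp_cnj by (rule refl)
    also have "\<dots> = exp (\<i> * complex_of_real (2*pi*real q/real N*real n)
             + cnj (\<i> * complex_of_real (2*pi*real q'/real N*real n)))"
      by (rule exp_add[symmetric])
    also have "\<i> * complex_of_real (2*pi*real q/real N*real n)
             + cnj (\<i> * complex_of_real (2*pi*real q'/real N*real n))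
             = \<i> * complex_of_real (2*pi*real_of_int (int q - int q') * real n / real N)"
    proof -
      have r: "2*pi*real q/real N*real n - 2*pi*real q'/real N*real n
             = 2*pi*real_of_int (int q - int q') * real n / real N"
        by (simp add: algebra_simps diff_divide_distrib)
      have "\<i> * complex_of_real (2*pi*real q/real N*real n)
             + cnj (\<i> * complex_of_real (2*pi*real q'/real N*real n))
           = \<i> * complex_of_real (2*pi*real q/real N*real n - 2*pi*real q'/real N*real n)"
        by (simp add: algebra_simps)
      thus ?thesis by (simp only: r)
    qed
    finally show ?thesis .
  qed
  have inner: "(\<Sum>n<N. E q n * cnj (E q' n)) = (if q = q' then of_nat N else 0)"
    if "q < N" "q' < N" for q q'
  proof -
    have "int N dvd (int q - int q') \<longleftrightarrow> q = q'"
    proof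
      assume "int N dvd (int q - int q')"
      moreover have "\<bar>int q - int q'\<bar> < int N" using that by auto
      moreover have "int q - int q' = 0"
      proof (rule ccontr)
        assume "int q - int q' \<noteq> 0"
        hence "\<bar>int N\<bar> \<le> \<bar>int q - int q'\<bar>"
          using dvd_imp_le_int \<open>int N dvd (int q - int q')\<close> by blast
        thus False using \<open>\<bar>int q - int q'\<bar> < int N\<close> by simp
      qed
      ultimately show "q = q'" by simp
    qed simp
    thus ?thesis using sum_root_unity[OF N, of "int q - int q'"] by (simp add: EE)
  qed
  have "complex_of_real (\<Sum>n<N. (cmod (\<Sum>q<N. E q n * x q))\<^sup>2)
        = (\<Sum>n<N. (\<Sum>q<N. E q n * x q) * cnj (\<Sum>q<N. E q n * x q))"
    unfolding of_real_sum complex_norm_square by (rule refl)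
  also have "\<dots> = (\<Sum>n<N. \<Sum>q<N. \<Sum>q'<N. x q * cnj (x q') * (E q n * cnj (E q' n)))"
    apply (simp only: cnj_sum complex_cnj_mult sum_product)
    apply (intro sum.cong refl)
    apply (simp add: mult_ac)
    done
  also have "\<dots> = (\<Sum>q<N. \<Sum>n<N. \<Sum>q'<N. x q * cnj (x q') * (E q n * cnj (E q' n)))"
    by (rule sum.swap)
  also have "\<dots> = (\<Sum>q<N. \<Sum>q'<N. \<Sum>n<N. x q * cnj (x q') * (E q n * cnj (E q' n)))"
    by (rule sum.cong[OF refl], rule sum.swap)
  also have "\<dots> = (\<Sum>q<N. \<Sum>q'<N. x q * cnj (x q') * (\<Sum>n<N. E q n * cnj (E q' n)))"
    by (simp add: sum_distrib_left)
  also have "\<dots> = (\<Sum>q<N. \<Sum>q'<N. (if q = q' then x q * cnj (x q') * of_nat N else 0))"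
    by (intro sum.cong refl) (simp add: inner)
  also have "\<dots> = (\<Sum>q<N. of_nat N * (x q * cnj (x q)))"
    by (rule sum.cong[OF refl]) (simp add: sum.delta' mult_ac)
  also have "\<dots> = complex_of_real (real N * (\<Sum>q<N. (cmod (x q))\<^sup>2))"
    by (simp only: of_real_mult of_real_sum complex_norm_square sum_distrib_left of_real_of_nat_eq)
  finally show ?thesis unfolding E_def of_real_eq_iff .
qed

lemma spec_norm_bound:
  fixes A :: "nat \<Rightarrow> nat \<Rightarrow> complex"
  assumes n: "n > 0" and B: "B \<ge> 0"
    and H: "\<And>v. (\<Sum>k<n. (cmod (v k))\<^sup>2) = 1 \<Longrightarrow> (\<Sum>i<m. (cmod (\<Sum>k<n. A i k * v k))\<^sup>2) \<le> B\<^sup>2"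
  shows "0 \<le> spec_norm m n A \<and> spec_norm m n A \<le> B"
proof -
  define S where "S = {sqrt (\<Sum>i<m. (cmod (\<Sum>k<n. A i k * v k))\<^sup>2) | v.
       (\<Sum>k<n. (cmod (v k))\<^sup>2) = 1}"
  have sn: "spec_norm m n A = Sup S" by (simp add: spec_norm_def S_def)
  define v0 where "v0 = (\<lambda>k::nat. if k = 0 then (1::complex) else 0)"
  have "(\<Sum>k<n. (cmod (v0 k))\<^sup>2) = (\<Sum>k<n. if k = 0 then 1 else 0)"
    by (rule sum.cong) (auto simp: v0_def)
  also have "\<dots> = 1" using n by simp
  finally have "(\<Sum>k<n. (cmod (v0 k))\<^sup>2) = 1" .
  hence mem: "sqrt (\<Sum>i<m. (cmod (\<Sum>k<n. A i k * v0 k))\<^sup>2) \<in> S" by (auto simp: S_def)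
  have le: "x \<le> B" if "x \<in> S" for x
  proof -
    from that obtain v where v: "(\<Sum>k<n. (cmod (v k))\<^sup>2) = 1"
      and x: "x = sqrt (\<Sum>i<m. (cmod (\<Sum>k<n. A i k * v k))\<^sup>2)" by (auto simp: S_def)
    have "x \<le> sqrt (B\<^sup>2)" unfolding x using H[OF v] by (rule real_sqrt_le_mono)
    thus ?thesis using B by simp
  qed
  have ne: "S \<noteq> {}" using mem by blast
  have "Sup S \<le> B" by (rule cSup_least[OF ne le])
  moreover have "sqrt (\<Sum>i<m. (cmod (\<Sum>k<n. A i k * v0 k))\<^sup>2) \<le> Sup S"
    by (rule cSup_upper[OF mem]) (use le in \<open>auto simp: bdd_above_def\<close>)
  moreover have "0 \<le> sqrt (\<Sum>i<m. (cmod (\<Sum>k<n. A i k * v0 k))\<^sup>2)"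
    by (simp add: sum_nonneg)
  ultimately show ?thesis unfolding sn by linarith
qed

lemma complex_cs:
  fixes a b :: "nat \<Rightarrow> complex"
  shows "(cmod (\<Sum>k\<in>I. a k * b k))\<^sup>2 \<le> (\<Sum>k\<in>I. (cmod (a k))\<^sup>2) * (\<Sum>k\<in>I. (cmod (b k))\<^sup>2)"
proof -
  have "cmod (\<Sum>k\<in>I. a k * b k) \<le> (\<Sum>k\<in>I. cmod (a k) * cmod (b k))"
    by (rule order_trans[OF norm_sum]) (simp add: norm_mult)
  hence "(cmod (\<Sum>k\<in>I. a k * b k))\<^sup>2 \<le> (\<Sum>k\<in>I. cmod (a k) * cmod (b k))\<^sup>2"
    by (rule power_mono) simp
  also have "\<dots> \<le> (\<Sum>k\<in>I. (cmod (a k))\<^sup>2) * (\<Sum>k\<in>I. (cmod (b k))\<^sup>2)"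
    by (rule Cauchy_Schwarz_ineq_sum)
  finally show ?thesis .
qed

lemma frob_bound:
  fixes A :: "nat \<Rightarrow> nat \<Rightarrow> complex"
  assumes b: "\<And>i k. i < n \<Longrightarrow> k < n \<Longrightarrow> cmod (A i k) \<le> b"
    and v: "(\<Sum>k<n. (cmod (v k))\<^sup>2) = 1"
  shows "(\<Sum>i<n. (cmod (\<Sum>k<n. A i k * v k))\<^sup>2) \<le> (real n * b)\<^sup>2"
proof -
  have "(\<Sum>i<n. (cmod (\<Sum>k<n. A i k * v k))\<^sup>2) \<le> (\<Sum>i<n. real n * b\<^sup>2)"
  proof (rule sum_mono)
    fix i assume i: "i \<in> {..<n}"
    have "(cmod (\<Sum>k<n. A i k * v k))\<^sup>2 \<le> (\<Sum>k<n. (cmod (A i k))\<^sup>2) * (\<Sum>k<n. (cmod (v k))\<^sup>2)"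
      by (rule complex_cs)
    also have "\<dots> = (\<Sum>k<n. (cmod (A i k))\<^sup>2)" using v by simp
    also have "\<dots> \<le> (\<Sum>k<n. b\<^sup>2)"
      using i b by (intro sum_mono power_mono) auto
    finally show "(cmod (\<Sum>k<n. A i k * v k))\<^sup>2 \<le> real n * b\<^sup>2" by simp
  qed
  also have "\<dots> = (real n * b)\<^sup>2" by (simp add: power2_eq_square)
  finally show ?thesis .
qed

lemma sum_mult_index:
  fixes g :: "nat \<Rightarrow> 'a::comm_monoid_add"
  assumes M: "M > 0"
  shows "(\<Sum>col<M*N. g col) = (\<Sum>p<M. \<Sum>q<N. g (q*M+p))"
proof -
  have bij: "bij_betw (\<lambda>(p,q). q*M+p) ({..<M} \<times> {..<N}) {..<M*N}"
  proof (rule bij_betwI[where g = "\<lambda>col. (col mod M, col div M)"])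
    show "(\<lambda>(p,q). q*M+p) \<in> {..<M} \<times> {..<N} \<rightarrow> {..<M*N}"
    proof
      fix x assume "x \<in> {..<M} \<times> {..<N}"
      then obtain p q where x: "x = (p,q)" "p < M" "q < N" by auto
      have "q*M+p < q*M + M" using x by simp
      also have "\<dots> = (q+1)*M" by simp
      also have "\<dots> \<le> N*M" using x by (intro mult_right_mono) auto
      finally show "(\<lambda>(p,q). q*M+p) x \<in> {..<M*N}" using x by (simp add: mult.commute)
    qed
    show "(\<lambda>col. (col mod M, col div M)) \<in> {..<M*N} \<rightarrow> {..<M} \<times> {..<N}"
      using M by (auto simp: less_mult_imp_div_less div_less_iff_less_mult mult.commute)
    show "(\<lambda>col. (col mod M, col div M)) ((\<lambda>(p,q). q*M+p) x) = x" if "x \<in> {..<M} \<times> {..<N}" for x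
      using that by auto
    show "(\<lambda>(p,q). q*M+p) ((\<lambda>col. (col mod M, col div M)) y) = y" if "y \<in> {..<M*N}" for y
      by (simp add: mult.commute)
  qed
  have "(\<Sum>col<M*N. g col) = (\<Sum>x\<in>{..<M} \<times> {..<N}. g ((\<lambda>(p,q). q*M+p) x))"
    by (rule sum.reindex_bij_betw[OF bij, symmetric])
  also have "\<dots> = (\<Sum>p<M. \<Sum>q<N. g (q*M+p))"
    by (simp add: sum.cartesian_product case_prod_beta)
  finally show ?thesis .
qed

lemma Psi_bound:
  fixes v :: "nat \<Rightarrow> complex"
  assumes M: "M > 0" and N: "N > 0"
  shows "(\<Sum>n<N. (cmod (\<Sum>col<M*N. Psi M N C n col * v col))\<^sup>2)
         \<le> real M * (\<Sum>col<M*N. (cmod (v col))\<^sup>2)"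
proof -
  define u where "u p n = exp (\<i> * complex_of_real (2 * pi * real p / real M * real (C n)))" for p n
  define e where "e q n = exp (\<i> * complex_of_real (2 * pi * real q / real N * real n))" for q n
  define w where "w n p = (\<Sum>q<N. e q n * v (q*M+p)) / complex_of_real (sqrt (real N))" for n p
  have psi_eq: "psi M N C p q n = u p n * e q n / complex_of_real (sqrt (real N))" for p q n
    by (simp add: psi_def u_def e_def exp_add)
  have row: "(\<Sum>col<M*N. Psi M N C n col * v col) = (\<Sum>p<M. u p n * w n p)" for n
  proof -
    have "(\<Sum>col<M*N. Psi M N C n col * v col) = (\<Sum>p<M. \<Sum>q<N. Psi M N C n (q*M+p) * v (q*M+p))"
      by (rule sum_mult_index[OF M])
    also have "\<dots> = (\<Sum>p<M. \<Sum>q<N. u p n * (e q n * v (q*M+p) / complex_of_real (sqrt (real N))))"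
      by (intro sum.cong refl) (simp add: Psi_def psi_eq)
    also have "\<dots> = (\<Sum>p<M. u p n * w n p)"
      by (simp add: w_def sum_distrib_left sum_divide_distrib)
    finally show ?thesis .
  qed
  have un: "cmod (u p n) = 1" for p n by (simp add: u_def)
  have "(\<Sum>n<N. (cmod (\<Sum>col<M*N. Psi M N C n col * v col))\<^sup>2)
        \<le> (\<Sum>n<N. real M * (\<Sum>p<M. (cmod (w n p))\<^sup>2))"
  proof (rule sum_mono)
    fix n
    have "(cmod (\<Sum>p<M. u p n * w n p))\<^sup>2 \<le> (\<Sum>p<M. (cmod (u p n))\<^sup>2) * (\<Sum>p<M. (cmod (w n p))\<^sup>2)"
      by (rule complex_cs)
    thus "(cmod (\<Sum>col<M*N. Psi M N C n col * v col))\<^sup>2 \<le> real M * (\<Sum>p<M. (cmod (w n p))\<^sup>2)"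
      by (simp add: row un)
  qed
  also have "\<dots> = real M * (\<Sum>p<M. \<Sum>n<N. (cmod (w n p))\<^sup>2)"
    by (simp add: sum_distrib_left[symmetric] sum.swap[of _ "{..<N}" "{..<M}"])
  also have "(\<Sum>p<M. \<Sum>n<N. (cmod (w n p))\<^sup>2) = (\<Sum>p<M. \<Sum>q<N. (cmod (v (q*M+p)))\<^sup>2)"
  proof (rule sum.cong[OF refl])
    fix p
    have "(\<Sum>n<N. (cmod (w n p))\<^sup>2) = (\<Sum>n<N. (cmod (\<Sum>q<N. e q n * v (q*M+p)))\<^sup>2) / real N"
    proof -
      have wn: "(cmod (w n p))\<^sup>2 = (cmod (\<Sum>q<N. e q n * v (q*M+p)))\<^sup>2 / real N" for n
        unfolding w_def norm_divide norm_of_real power_divide using N by simp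
      show ?thesis unfolding wn sum_divide_distrib by (rule refl)
    qed
    also have "\<dots> = real N * (\<Sum>q<N. (cmod (v (q*M+p)))\<^sup>2) / real N"
      unfolding e_def by (subst parseval[OF N]) (rule refl)
    also have "\<dots> = (\<Sum>q<N. (cmod (v (q*M+p)))\<^sup>2)" using N by simp
    finally show "(\<Sum>n<N. (cmod (w n p))\<^sup>2) = (\<Sum>q<N. (cmod (v (q*M+p)))\<^sup>2)" .
  qed
  also have "\<dots> = (\<Sum>col<M*N. (cmod (v col))\<^sup>2)"
    by (rule sum_mult_index[OF M, symmetric])
  finally show ?thesis .
qed

definition th :: "nat \<Rightarrow> nat \<Rightarrow> nat \<Rightarrow> nat \<Rightarrow> nat \<Rightarrow> nat \<Rightarrow> nat \<Rightarrow> nat \<Rightarrow> real" where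
  "th M N a b q1 q2 n c = 2*pi*(real b - real a)/real M * real c + 2*pi*(real q2 - real q1)/real N * real n"

lemma gram_eq:
  assumes N: "N > 0"
  shows "gram M N C q1 q2 a b = (\<Sum>n<N. exp (\<i> * complex_of_real (th M N a b q1 q2 n (C n)))) / of_nat N"
proof -
  have "cnj (psi M N C a q1 n) * psi M N C b q2 n = exp (\<i> * complex_of_real (th M N a b q1 q2 n (C n))) / of_nat N" for n
  proof -
    define a1 where "a1 = 2 * pi * real a / real M * real (C n)"
    define b1 where "b1 = 2 * pi * real q1 / real N * real n"
    define a2 where "a2 = 2 * pi * real b / real M * real (C n)"
    define b2 where "b2 = 2 * pi * real q2 / real N * real n"
    define r where "r = complex_of_real (sqrt (real N))"
    have rr: "r * r = of_nat N" unfolding r_def of_real_mult[symmetric] by simp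
    have c1: "cnj (psi M N C a q1 n) = exp (- (\<i> * complex_of_real a1) - \<i> * complex_of_real b1) / r"
      by (simp add: psi_def a1_def b1_def r_def exp_cnj)
    have c2: "psi M N C b q2 n = exp (\<i> * complex_of_real a2 + \<i> * complex_of_real b2) / r"
      by (simp add: psi_def a2_def b2_def r_def)
    have "cnj (psi M N C a q1 n) * psi M N C b q2 n
        = exp ((- (\<i> * complex_of_real a1) - \<i> * complex_of_real b1) + (\<i> * complex_of_real a2 + \<i> * complex_of_real b2)) / (r * r)"
      unfolding c1 c2 exp_add by simp
    also have "(- (\<i> * complex_of_real a1) - \<i> * complex_of_real b1) + (\<i> * complex_of_real a2 + \<i> * complex_of_real b2)
        = \<i> * complex_of_real (a2 - a1 + (b2 - b1))" by (simp add: algebra_simps)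
    also have "a2 - a1 + (b2 - b1) = th M N a b q1 q2 n (C n)"
      by (simp add: a1_def a2_def b1_def b2_def th_def algebra_simps diff_divide_distrib)
    finally show ?thesis unfolding rr .
  qed
  thus ?thesis unfolding gram_def by (simp add: sum_divide_distrib)
qed

lemma exp_cis: "exp (\<i> * complex_of_real x) = cis x"
  by (simp add: cis_conv_exp)

lemma th_sum_zero:
  assumes M: "M > 0" and ab: "a < M" "b < M" "a \<noteq> b"
  shows "(\<Sum>c<M. exp (\<i> * complex_of_real (th M N a b q1 q2 n c))) = 0"
proof -
  define z where "z = exp (\<i> * complex_of_real (2*pi*(real q2 - real q1)/real N * real n))"
  have "exp (\<i> * complex_of_real (th M N a b q1 q2 n c))
        = z * exp (\<i> * complex_of_real (2*pi*real_of_int (int b - int a) * real c / real M))" for c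
  proof -
    have "\<i> * complex_of_real (th M N a b q1 q2 n c)
       = \<i> * complex_of_real (2*pi*(real q2 - real q1)/real N * real n)
         + \<i> * complex_of_real (2*pi*real_of_int (int b - int a) * real c / real M)"
      by (simp add: th_def algebra_simps)
    thus ?thesis by (simp add: z_def exp_add)
  qed
  hence "(\<Sum>c<M. exp (\<i> * complex_of_real (th M N a b q1 q2 n c)))
       = z * (\<Sum>c<M. exp (\<i> * complex_of_real (2*pi*real_of_int (int b - int a) * real c / real M)))"
    by (simp add: sum_distrib_left)
  also have "\<not> int M dvd (int b - int a)"
  proof
    assume d: "int M dvd (int b - int a)"
    have "int b - int a \<noteq> 0" using ab by simp
    hence "\<bar>int M\<bar> \<le> \<bar>int b - int a\<bar>" using dvd_imp_le_int d by blast
    thus False using ab by simp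
  qed
  hence "(\<Sum>c<M. exp (\<i> * complex_of_real (2*pi*real_of_int (int b - int a) * real c / real M))) = 0"
    using sum_root_unity[OF M, of "int b - int a"] by (simp only: if_False)
  finally show ?thesis by simp
qed

lemma cos_sum_zero:
  assumes "M > 0" "a < M" "b < M" "a \<noteq> b"
  shows "(\<Sum>c<M. cos (th M N a b q1 q2 n c)) = 0" "(\<Sum>c<M. sin (th M N a b q1 q2 n c)) = 0"
proof -
  have "Re (\<Sum>c<M. exp (\<i> * complex_of_real (th M N a b q1 q2 n c))) = 0"
       "Im (\<Sum>c<M. exp (\<i> * complex_of_real (th M N a b q1 q2 n c))) = 0"
    using th_sum_zero[OF assms] by simp_all
  thus "(\<Sum>c<M. cos (th M N a b q1 q2 n c)) = 0" "(\<Sum>c<M. sin (th M N a b q1 q2 n c)) = 0"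
    by (simp_all add: exp_cis Re_sum Im_sum)
qed

lemma sum_bound_2s:
  assumes "\<bar>\<Sum>n<N. cos (th M N a b q1 q2 n (C n))\<bar> < s" "\<bar>\<Sum>n<N. sin (th M N a b q1 q2 n (C n))\<bar> < s"
  shows "cmod (\<Sum>n<N. exp (\<i> * complex_of_real (th M N a b q1 q2 n (C n)))) \<le> 2 * s"
proof -
  let ?z = "\<Sum>n<N. exp (\<i> * complex_of_real (th M N a b q1 q2 n (C n)))"
  have "Re ?z = (\<Sum>n<N. cos (th M N a b q1 q2 n (C n)))" "Im ?z = (\<Sum>n<N. sin (th M N a b q1 q2 n (C n)))"
    by (simp_all add: exp_cis Re_sum Im_sum)
  thus ?thesis using cmod_le[of ?z] assms by linarith
qed

lemma final_ineq:
  fixes K L N M d1 d2 mI mB S e :: real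
  assumes N: "N > 0" and M: "M > 0" and L: "L > 0" and Lb: "1 / L \<le> 1/10000"
    and d1: "0 \<le> d1" "d1 \<le> 1/10000" and d2: "0 \<le> d2" "d2 \<le> 1/10000"
    and mI: "mI \<le> e" and mB: "mB \<le> e" and e: "0 \<le> e" "e \<le> 1/10000" "e * L \<le> 1/10000"
    and S: "0 \<le> S" "S \<le> sqrt M" and K: "0 \<le> K"
    and Kb: "K \<le> N * (1/8 - d1 - d2)\<^sup>2 / (81 * M * L * (1 + 2 * d2 / 3))"
  shows "17 * sqrt (K * L * (1 + mI) / N) * S + 48 * mB * L + 2 * K / N * S\<^sup>2 + 3 * mI \<le> 1/4"
proof -
  define X where "X = 1/8 - d1 - d2"
  have X2: "X\<^sup>2 \<le> 1/64"
  proof -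
    have "0 \<le> X" "X \<le> 1/8" using d1 d2 by (auto simp: X_def)
    hence "X\<^sup>2 \<le> (1/8)\<^sup>2" by (intro power_mono) auto
    thus ?thesis by (simp add: power2_eq_square)
  qed
  define D where "D = 81 * M * L * (1 + 2 * d2 / 3)"
  have D0: "D > 0" using M L d2 by (simp add: D_def)
  have DL: "81 * M * L \<le> D" using M L d2 unfolding D_def by (simp add: mult_le_cancel_left1 algebra_simps)
  have "K * D \<le> N * X\<^sup>2" using Kb D0 by (simp add: X_def D_def[symmetric] pos_le_divide_eq)
  hence "K * (81 * M * L) \<le> N * X\<^sup>2" using DL K by (meson mult_left_mono order_trans)
  moreover have "N * X\<^sup>2 \<le> N * (1/64)" using X2 N by (intro mult_left_mono) auto
  ultimately have "K * (81 * M * L) \<le> N / 64" by simp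
  hence KLM: "K * L * M / N \<le> 1 / 5184" using N by (simp add: field_simps)
  have KM: "K * M / N \<le> 1 / 5184 * (1 / L)"
  proof -
    have "K * M / N = (K * L * M / N) * (1 / L)" using L by (simp add: field_simps)
    also have "\<dots> \<le> 1 / 5184 * (1 / L)" using KLM L by (intro mult_right_mono) auto
    finally show ?thesis .
  qed
  have KLN: "0 \<le> K * L / N" using K L N by simp
  have t1a: "sqrt (K * L * (1 + mI) / N) * S \<le> sqrt (K * L * (1 + e) / N) * S"
  proof (rule mult_right_mono[OF _ S(1)])
    have "K * L * (1 + mI) / N = (K * L / N) * (1 + mI)" by simp
    also have "\<dots> \<le> (K * L / N) * (1 + e)" using KLN mI by (intro mult_left_mono) auto
    also have "\<dots> = K * L * (1 + e) / N" by simp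
    finally show "sqrt (K * L * (1 + mI) / N) \<le> sqrt (K * L * (1 + e) / N)" by simp
  qed
  also have "\<dots> \<le> sqrt (K * L * (1 + e) / N) * sqrt M"
  proof -
    have "0 \<le> K * L * (1 + e) / N" using K L N e by simp
    thus ?thesis using S by (intro mult_left_mono) auto
  qed
  also have "\<dots> = sqrt (K * L * M / N * (1 + e))" by (simp add: real_sqrt_mult[symmetric] field_simps)
  also have "\<dots> \<le> sqrt ((139/10000)\<^sup>2)"
  proof (rule real_sqrt_le_mono)
    have "K * L * M / N * (1 + e) \<le> 1 / 5184 * (1 + 1/10000)"
      using KLM e K L M N by (intro mult_mono) auto
    moreover have "1 / 5184 * (1 + 1/10000) \<le> (139/10000::real)\<^sup>2" by (simp add: power2_eq_square)
    ultimately show "K * L * M / N * (1 + e) \<le> (139/10000)\<^sup>2" by linarith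
  qed
  also have "\<dots> = 139/10000" by simp
  finally have T1: "sqrt (K * L * (1 + mI) / N) * S \<le> 139/10000" .
  have T2: "48 * mB * L \<le> 48 / 10000"
  proof -
    have "mB * L \<le> e * L" using mB L by (intro mult_right_mono) auto
    thus ?thesis using e by (simp add: mult_ac)
  qed
  have T3: "2 * K / N * S\<^sup>2 \<le> 2 / 51840000"
  proof -
    have "S\<^sup>2 \<le> (sqrt M)\<^sup>2" using S by (intro power_mono) auto
    hence S2: "S\<^sup>2 \<le> M" using M by simp
    have "2 * K / N * S\<^sup>2 \<le> 2 * K / N * M" using S2 K N by (intro mult_left_mono) auto
    also have "\<dots> = 2 * (K * M / N)" by simp
    also have "\<dots> \<le> 2 * (1 / 5184 * (1/10000))"
      using KM Lb by linarith
    finally show ?thesis by simp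
  qed
  have T4: "3 * mI \<le> 3 / 10000" using mI e by simp
  show ?thesis using T1 T2 T3 T4 by linarith
qed

lemma asymp_facts:
  fixes M c eps :: real
  assumes M: "M > 1" and eps: "eps > 0"
  shows "\<exists>N0::nat. \<forall>N\<ge>N0.
     4 * M^2 * (real N)^2 * exp (-((real N powr (2/3))\<^sup>2) / (2 * real N)) \<le> eps \<and>
     24 * sqrt ((M - 1) / real N) * ln (M * real N) * (2 * sqrt (ln (M * real N) - c) + 1) \<le> 1/10000 \<and>
     3 / 2 * sqrt ((M - 1) / real N) * (2 * sqrt c2 + 1) \<le> 1/10000 \<and>
     2 * M * (real N powr (2/3)) / real N \<le> 1/10000 \<and>
     2 * M * (real N powr (2/3)) / real N * ln (M * real N) \<le> 1/10000 \<and>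
     1 / ln (M * real N) \<le> 1/10000 \<and> real N \<ge> 2"
proof -
  have l1: "((\<lambda>x::real. 4 * M^2 * x^2 * exp (-((x powr (2/3))\<^sup>2) / (2 * x))) \<longlongrightarrow> 0) at_top"
    using M by real_asymp
  have l2: "((\<lambda>x::real. 24 * sqrt ((M - 1) / x) * ln (M * x) * (2 * sqrt (ln (M * x) - c) + 1)) \<longlongrightarrow> 0) at_top"
    using M by real_asymp
  have l3: "((\<lambda>x::real. 3 / 2 * sqrt ((M - 1) / x) * (2 * sqrt c2 + 1)) \<longlongrightarrow> 0) at_top"
    using M by real_asymp
  have l4: "((\<lambda>x::real. 2 * M * (x powr (2/3)) / x) \<longlongrightarrow> 0) at_top"
    using M by real_asymp
  have l5: "((\<lambda>x::real. 2 * M * (x powr (2/3)) / x * ln (M * x)) \<longlongrightarrow> 0) at_top"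
    using M by real_asymp
  have l6: "((\<lambda>x::real. 1 / ln (M * x)) \<longlongrightarrow> 0) at_top"
    using M by real_asymp
  have "eventually (\<lambda>x::real.
     4 * M^2 * x^2 * exp (-((x powr (2/3))\<^sup>2) / (2 * x)) \<le> eps \<and>
     24 * sqrt ((M - 1) / x) * ln (M * x) * (2 * sqrt (ln (M * x) - c) + 1) \<le> 1/10000 \<and>
     3 / 2 * sqrt ((M - 1) / x) * (2 * sqrt c2 + 1) \<le> 1/10000 \<and>
     2 * M * (x powr (2/3)) / x \<le> 1/10000 \<and>
     2 * M * (x powr (2/3)) / x * ln (M * x) \<le> 1/10000 \<and>
     1 / ln (M * x) \<le> 1/10000 \<and> x \<ge> 2) at_top"
  proof -
    have pos: "(0::real) < 1/10000" by simp
    show ?thesis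
    using order_tendstoD(2)[OF l1 eps] order_tendstoD(2)[OF l2 pos]
      order_tendstoD(2)[OF l3 pos] order_tendstoD(2)[OF l4 pos]
      order_tendstoD(2)[OF l5 pos] order_tendstoD(2)[OF l6 pos]
      eventually_ge_at_top[of "2::real"]
    by eventually_elim auto
  qed
  hence "eventually (\<lambda>N::nat.
     4 * M^2 * (real N)^2 * exp (-((real N powr (2/3))\<^sup>2) / (2 * real N)) \<le> eps \<and>
     24 * sqrt ((M - 1) / real N) * ln (M * real N) * (2 * sqrt (ln (M * real N) - c) + 1) \<le> 1/10000 \<and>
     3 / 2 * sqrt ((M - 1) / real N) * (2 * sqrt c2 + 1) \<le> 1/10000 \<and>
     2 * M * (real N powr (2/3)) / real N \<le> 1/10000 \<and>
     2 * M * (real N powr (2/3)) / real N * ln (M * real N) \<le> 1/10000 \<and>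
     1 / ln (M * real N) \<le> 1/10000 \<and> real N \<ge> 2) sequentially"
    using filterlim_real_sequentially unfolding filterlim_iff by blast
  thus ?thesis unfolding eventually_sequentially by blast
qed

definition FF :: "nat \<Rightarrow> nat \<Rightarrow> nat \<Rightarrow> nat \<Rightarrow> nat \<Rightarrow> nat \<Rightarrow> nat \<Rightarrow> nat \<Rightarrow> nat \<Rightarrow> real" where
  "FF M N j a b q1 q2 n c = (if j = 0 then cos (th M N a b q1 q2 n c)
      else if j = 1 then - cos (th M N a b q1 q2 n c)
      else if j = 2 then sin (th M N a b q1 q2 n c) else - sin (th M N a b q1 q2 n c))"

lemma FF_bound: "\<bar>FF M N j a b q1 q2 n c\<bar> \<le> 1"
  by (simp add: FF_def)

lemma FF_mean:
  assumes "M > 0" "a < M" "b < M" "a \<noteq> b"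
  shows "(\<Sum>c<M. FF M N j a b q1 q2 n c) = 0"
  using cos_sum_zero[OF assms, of N q1 q2 n]
  by (cases "j = 0"; cases "j = 1"; cases "j = 2") (simp_all add: FF_def sum_negf)

lemma bad_card:
  assumes M: "M > 0" and N: "N > 0" and s: "s \<ge> 0" and ab: "a < M" "b < M"
  shows "real (card {C \<in> PiE {..<N} (\<lambda>_. {..<M}). a \<noteq> b \<and> s \<le> (\<Sum>n<N. FF M N j a b q1 q2 n (C n))})
         \<le> real M ^ N * exp (-(s\<^sup>2) / (2 * real N))" (is "real (card ?B) \<le> ?R")
proof (cases "a = b")
  case False
  hence "?B = {C \<in> PiE {..<N} (\<lambda>_. {..<M}). s \<le> (\<Sum>n<N. FF M N j a b q1 q2 n (C n))}" by auto
  thus ?thesis using chernoff_count[OF N M FF_bound FF_mean[OF M ab False] s] by simp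
next
  case True
  hence e: "?B = {}" by auto
  show ?thesis unfolding e by simp
qed

lemma unif_prob_nonneg: "unif_prob M N P \<ge> 0"
  by (simp add: unif_prob_def)

lemma main_prob:
  fixes eps :: real
  assumes M: "M \<ge> 2" and N: "N \<ge> 2"
    and f1: "4 * real M^2 * (real N)^2 * exp (-((real N powr (2/3))\<^sup>2) / (2 * real N)) \<le> eps"
    and Pgood: "\<And>C. mu_I M N C \<le> 2 * real M * (real N powr (2/3)) / real N \<Longrightarrow>
                     mu_B M N C \<le> 2 * real M * (real N powr (2/3)) / real N \<Longrightarrow>
                     0 \<le> spec_norm N (M * N) (Psi M N C) \<Longrightarrow>
                     spec_norm N (M * N) (Psi M N C) \<le> sqrt (real M) \<Longrightarrow> P C"
  shows "unif_prob M N P \<ge> 1 - eps"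
proof -
  have M0: "M > 0" and N0: "N > 0" using M N by auto
  define s where "s = real N powr (2/3)"
  have s0: "s \<ge> 0" by (simp add: s_def)
  define e where "e = 2 * real M * s / real N"
  define A where "A = PiE {..<N} (\<lambda>_. {..<M::nat})"
  have finA: "finite A" by (simp add: A_def finite_PiE)
  have cardA: "card A = M ^ N" by (simp add: A_def card_PiE)
  define Good where "Good = {C \<in> A. \<forall>a<M. \<forall>b<M. \<forall>q1<N. \<forall>q2<N. a \<noteq> b \<longrightarrow>
       \<bar>\<Sum>n<N. cos (th M N a b q1 q2 n (C n))\<bar> < s \<and> \<bar>\<Sum>n<N. sin (th M N a b q1 q2 n (C n))\<bar> < s}"
  have entry: "cmod (gram M N C q1 q2 a b) \<le> 2 * s / real N"
    if C: "C \<in> Good" and ab: "a < M" "b < M" "a \<noteq> b" and q: "q1 < N" "q2 < N" for C a b q1 q2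
  proof -
    have "cmod (\<Sum>n<N. exp (\<i> * complex_of_real (th M N a b q1 q2 n (C n)))) \<le> 2 * s"
      using C ab q by (intro sum_bound_2s) (auto simp: Good_def)
    thus ?thesis using N0 by (simp add: gram_eq[OF N0] norm_divide divide_right_mono)
  qed
  have diag: "gram M N C q q a a = 1" for C q a
  proof -
    have "th M N a a q q n c = 0" for n c by (simp add: th_def)
    thus ?thesis using N0 by (simp add: gram_eq[OF N0])
  qed
  have offq: "gram M N C q1 q2 a a = 0" if q: "q1 < N" "q2 < N" "q1 \<noteq> q2" for C q1 q2 a
  proof -
    have "th M N a a q1 q2 n c = 2*pi*real_of_int (int q2 - int q1) * real n / real N" for n c
      by (simp add: th_def)
    hence "(\<Sum>n<N. exp (\<i> * complex_of_real (th M N a a q1 q2 n (C n))))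
          = (\<Sum>n<N. exp (\<i> * complex_of_real (2*pi*real_of_int (int q2 - int q1) * real n / real N)))"
      by simp
    also have "\<not> int N dvd (int q2 - int q1)"
    proof
      assume d: "int N dvd (int q2 - int q1)"
      have "int q2 - int q1 \<noteq> 0" using q by simp
      hence "\<bar>int N\<bar> \<le> \<bar>int q2 - int q1\<bar>" using dvd_imp_le_int d by blast
      thus False using q by simp
    qed
    hence "(\<Sum>n<N. exp (\<i> * complex_of_real (2*pi*real_of_int (int q2 - int q1) * real n / real N))) = 0"
      using sum_root_unity[OF N0, of "int q2 - int q1"] by (simp only: if_False)
    finally show ?thesis by (simp add: gram_eq[OF N0])
  qed
  have e0: "0 \<le> 2 * s / real N" using s0 by simp
  have eeq: "real M * (2 * s / real N) = e" by (simp add: e_def)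
  have goodP: "P C" if C: "C \<in> Good" for C
  proof (rule Pgood)
    have muI: "spec_norm M M (\<lambda>a b. gram M N C q q a b - (if a = b then 1 else 0)) \<le> e" if q: "q < N" for q
    proof -
      have "0 \<le> spec_norm M M (\<lambda>a b. gram M N C q q a b - (if a = b then 1 else 0)) \<and>
            spec_norm M M (\<lambda>a b. gram M N C q q a b - (if a = b then 1 else 0)) \<le> real M * (2 * s / real N)"
      proof (rule spec_norm_bound[OF M0])
        show "0 \<le> real M * (2 * s / real N)" using e0 by (intro mult_nonneg_nonneg) auto
        fix v :: "nat \<Rightarrow> complex" assume v: "(\<Sum>k<M. (cmod (v k))\<^sup>2) = 1"
        show "(\<Sum>i<M. (cmod (\<Sum>k<M. (gram M N C q q i k - (if i = k then 1 else 0)) * v k))\<^sup>2)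
              \<le> (real M * (2 * s / real N))\<^sup>2"
        proof (rule frob_bound[OF _ v])
          fix i k assume ik: "i < M" "k < M"
          show "cmod (gram M N C q q i k - (if i = k then 1 else 0)) \<le> 2 * s / real N"
          proof (cases "i = k")
            case True thus ?thesis using e0 by (simp add: diag)
          next
            case False thus ?thesis using entry[OF C ik False q q] by simp
          qed
        qed
      qed
      thus ?thesis using eeq by simp
    qed
    show "mu_I M N C \<le> 2 * real M * (real N powr (2/3)) / real N"
      unfolding mu_I_def
    proof (rule Max.boundedI)
      show "finite ((\<lambda>q. spec_norm M M (\<lambda>a b. gram M N C q q a b - (if a = b then 1 else 0))) ` {..<N})"
        by simp
      show "(\<lambda>q. spec_norm M M (\<lambda>a b. gram M N C q q a b - (if a = b then 1 else 0))) ` {..<N} \<noteq> {}"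
        using N0 by auto
      fix x assume "x \<in> (\<lambda>q. spec_norm M M (\<lambda>a b. gram M N C q q a b - (if a = b then 1 else 0))) ` {..<N}"
      then obtain q where "q < N" "x = spec_norm M M (\<lambda>a b. gram M N C q q a b - (if a = b then 1 else 0))"
        by auto
      thus "x \<le> 2 * real M * (real N powr (2/3)) / real N" using muI e_def s_def by simp
    qed
    have muB: "spec_norm M M (gram M N C q1 q2) \<le> e" if q: "q1 < N" "q2 < N" "q1 \<noteq> q2" for q1 q2
    proof -
      have "0 \<le> spec_norm M M (gram M N C q1 q2) \<and> spec_norm M M (gram M N C q1 q2) \<le> real M * (2 * s / real N)"
      proof (rule spec_norm_bound[OF M0])
        show "0 \<le> real M * (2 * s / real N)" using e0 by (intro mult_nonneg_nonneg) auto
        fix v :: "nat \<Rightarrow> complex" assume v: "(\<Sum>k<M. (cmod (v k))\<^sup>2) = 1"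
        show "(\<Sum>i<M. (cmod (\<Sum>k<M. gram M N C q1 q2 i k * v k))\<^sup>2) \<le> (real M * (2 * s / real N))\<^sup>2"
        proof (rule frob_bound[OF _ v])
          fix i k assume ik: "i < M" "k < M"
          show "cmod (gram M N C q1 q2 i k) \<le> 2 * s / real N"
          proof (cases "i = k")
            case True thus ?thesis using e0 offq[OF q] by simp
          next
            case False thus ?thesis using entry[OF C ik False q(1,2)] by simp
          qed
        qed
      qed
      thus ?thesis using eeq by simp
    qed
    show "mu_B M N C \<le> 2 * real M * (real N powr (2/3)) / real N"
      unfolding mu_B_def
    proof (rule Max.boundedI)
      have "{spec_norm M M (gram M N C q1 q2) | q1 q2. q1 < N \<and> q2 < N \<and> q1 \<noteq> q2}
            \<subseteq> (\<lambda>(q1,q2). spec_norm M M (gram M N C q1 q2)) ` ({..<N} \<times> {..<N})" by auto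
      thus "finite {spec_norm M M (gram M N C q1 q2) | q1 q2. q1 < N \<and> q2 < N \<and> q1 \<noteq> q2}"
        by (rule finite_subset) simp
      show "{spec_norm M M (gram M N C q1 q2) | q1 q2. q1 < N \<and> q2 < N \<and> q1 \<noteq> q2} \<noteq> {}"
      proof -
        have "0 < N" "1 < N" "(0::nat) \<noteq> 1" using N by auto
        hence "spec_norm M M (gram M N C 0 1) \<in> {spec_norm M M (gram M N C q1 q2) | q1 q2. q1 < N \<and> q2 < N \<and> q1 \<noteq> q2}"
          by blast
        thus ?thesis by blast
      qed
      fix x assume "x \<in> {spec_norm M M (gram M N C q1 q2) | q1 q2. q1 < N \<and> q2 < N \<and> q1 \<noteq> q2}"
      then obtain q1 q2 where "q1 < N" "q2 < N" "q1 \<noteq> q2" "x = spec_norm M M (gram M N C q1 q2)"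
        by auto
      thus "x \<le> 2 * real M * (real N powr (2/3)) / real N" using muB e_def s_def by simp
    qed
    have "0 \<le> spec_norm N (M * N) (Psi M N C) \<and> spec_norm N (M * N) (Psi M N C) \<le> sqrt (real M)"
    proof (rule spec_norm_bound)
      show "M * N > 0" using M0 N0 by simp
      show "0 \<le> sqrt (real M)" by simp
      fix v :: "nat \<Rightarrow> complex" assume v: "(\<Sum>k<M * N. (cmod (v k))\<^sup>2) = 1"
      show "(\<Sum>i<N. (cmod (\<Sum>k<M * N. Psi M N C i k * v k))\<^sup>2) \<le> (sqrt (real M))\<^sup>2"
        using Psi_bound[OF M0 N0, of C v] v by simp
    qed
    thus "0 \<le> spec_norm N (M * N) (Psi M N C)" "spec_norm N (M * N) (Psi M N C) \<le> sqrt (real M)"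
      by auto
  qed
  define I where "I = {..<4::nat} \<times> {..<M} \<times> {..<M} \<times> {..<N} \<times> {..<N}"
  define Bad where "Bad = (\<lambda>(j,a,b,q1,q2). {C \<in> A. a \<noteq> b \<and> s \<le> (\<Sum>n<N. FF M N j a b q1 q2 n (C n))})"
  have cover: "A - Good \<subseteq> (\<Union>x\<in>I. Bad x)"
  proof
    fix C assume C: "C \<in> A - Good"
    hence CA: "C \<in> A" and CG: "C \<notin> Good" by auto
    have "\<exists>a<M. \<exists>b<M. \<exists>q1<N. \<exists>q2<N. a \<noteq> b \<and>
       \<not> (\<bar>\<Sum>n<N. cos (th M N a b q1 q2 n (C n))\<bar> < s \<and> \<bar>\<Sum>n<N. sin (th M N a b q1 q2 n (C n))\<bar> < s)"
      using CA CG unfolding Good_def by blast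
    then obtain a b q1 q2 where abq: "a < M" "b < M" "q1 < N" "q2 < N" "a \<noteq> b"
      and nb: "\<not> (\<bar>\<Sum>n<N. cos (th M N a b q1 q2 n (C n))\<bar> < s \<and> \<bar>\<Sum>n<N. sin (th M N a b q1 q2 n (C n))\<bar> < s)"
      by blast
    have sc: "(\<Sum>n<N. FF M N 0 a b q1 q2 n (C n)) = (\<Sum>n<N. cos (th M N a b q1 q2 n (C n)))"
             "(\<Sum>n<N. FF M N 1 a b q1 q2 n (C n)) = - (\<Sum>n<N. cos (th M N a b q1 q2 n (C n)))"
             "(\<Sum>n<N. FF M N 2 a b q1 q2 n (C n)) = (\<Sum>n<N. sin (th M N a b q1 q2 n (C n)))"
             "(\<Sum>n<N. FF M N 3 a b q1 q2 n (C n)) = - (\<Sum>n<N. sin (th M N a b q1 q2 n (C n)))"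
      by (simp_all add: FF_def sum_negf)
    have "\<exists>j<4. s \<le> (\<Sum>n<N. FF M N j a b q1 q2 n (C n))"
    proof -
      have "s \<le> (\<Sum>n<N. FF M N 0 a b q1 q2 n (C n)) \<or> s \<le> (\<Sum>n<N. FF M N 1 a b q1 q2 n (C n)) \<or>
            s \<le> (\<Sum>n<N. FF M N 2 a b q1 q2 n (C n)) \<or> s \<le> (\<Sum>n<N. FF M N 3 a b q1 q2 n (C n))"
        unfolding sc using nb by linarith
      thus ?thesis
      proof (elim disjE)
        assume h: "s \<le> (\<Sum>n<N. FF M N 0 a b q1 q2 n (C n))"
        show ?thesis by (rule exI[of _ 0], rule conjI[OF _ h]) simp
      next
        assume h: "s \<le> (\<Sum>n<N. FF M N 1 a b q1 q2 n (C n))"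
        show ?thesis by (rule exI[of _ 1], rule conjI[OF _ h]) simp
      next
        assume h: "s \<le> (\<Sum>n<N. FF M N 2 a b q1 q2 n (C n))"
        show ?thesis by (rule exI[of _ 2], rule conjI[OF _ h]) simp
      next
        assume h: "s \<le> (\<Sum>n<N. FF M N 3 a b q1 q2 n (C n))"
        show ?thesis by (rule exI[of _ 3], rule conjI[OF _ h]) simp
      qed
    qed
    then obtain j where j: "j < 4" "s \<le> (\<Sum>n<N. FF M N j a b q1 q2 n (C n))" by blast
    have "C \<in> Bad (j,a,b,q1,q2)" using CA j abq by (simp add: Bad_def)
    moreover have "(j,a,b,q1,q2) \<in> I" using j abq by (auto simp: I_def)
    ultimately show "C \<in> (\<Union>x\<in>I. Bad x)" by blast
  qed
  have GA: "Good \<subseteq> A" unfolding Good_def by (rule Collect_subset)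
  define R where "R = real M ^ N * exp (-(s\<^sup>2) / (2 * real N))"
  have badc: "real (card (Bad x)) \<le> R" if "x \<in> I" for x
  proof -
    obtain j a b q1 q2 where x: "x = (j,a,b,q1,q2)" "a < M" "b < M" using \<open>x \<in> I\<close> by (auto simp: I_def)
    show ?thesis unfolding x Bad_def R_def A_def using bad_card[OF M0 N0 s0 x(2,3)] by simp
  qed
  have finI: "finite I" by (simp add: I_def)
  have cardI: "card I = 4 * M * M * N * N" by (simp add: I_def card_cartesian_product)
  have "real (card (A - Good)) \<le> real (card (\<Union>x\<in>I. Bad x))"
    using cover finI finA by (intro of_nat_mono card_mono) (auto simp: Bad_def)
  also have "\<dots> \<le> real (\<Sum>x\<in>I. card (Bad x))" by (intro of_nat_mono card_UN_le finI)
  also have "\<dots> = (\<Sum>x\<in>I. real (card (Bad x)))" by simp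
  also have "\<dots> \<le> (\<Sum>x\<in>I. R)" by (rule sum_mono) (rule badc)
  also have "\<dots> = real (4 * M * M * N * N) * R" using cardI by simp
  finally have cbad: "real (card (A - Good)) \<le> real (4 * M * M * N * N) * R" .
  have "real (card A) \<le> real (card Good) + real (card (A - Good))"
  proof -
    have "A = Good \<union> (A - Good)" using GA by blast
    hence "card A \<le> card Good + card (A - Good)" by (metis card_Un_le)
    thus ?thesis by linarith
  qed
  have "Good \<subseteq> {C \<in> A. P C}" using goodP GA by blast
  hence "card Good \<le> card {C \<in> A. P C}" using finA by (intro card_mono) auto
  have MN: "real M ^ N > 0" using M0 by simp
  have "1 - eps \<le> 1 - real (4 * M * M * N * N) * exp (-(s\<^sup>2) / (2 * real N))"
    using f1 by (simp add: s_def power2_eq_square mult_ac)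
  also have "\<dots> = (real M ^ N - real (4 * M * M * N * N) * R) / real M ^ N"
    using MN by (simp add: R_def field_simps)
  also have "\<dots> \<le> real (card {C \<in> A. P C}) / real M ^ N"
    using MN cbad \<open>card Good \<le> card {C \<in> A. P C}\<close> \<open>real (card A) \<le> real (card Good) + real (card (A - Good))\<close> cardA
    by (intro divide_right_mono) auto
  also have "\<dots> = unif_prob M N P" by (simp add: unif_prob_def A_def)
  finally show ?thesis .
qed

theorem theorem3:
  fixes M :: nat
  assumes "M \<ge> 2"
  shows "\<forall>\<epsilon>::real. \<epsilon> > 0 \<longrightarrow> (\<exists>N0. \<forall>N\<ge>N0. N > 0 \<longrightarrow> (\<forall>K::nat. K > 0 \<longrightarrow>
     (let L = ln (real M * real N);
          d1 = 24 * sqrt ((real M - 1) / real N) * L * (2 * sqrt (L - ln \<epsilon>) + 1);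
          d2 = 3 / 2 * sqrt ((real M - 1) / real N) * (2 * sqrt (ln (2 * real M) - ln \<epsilon>) + 1)
      in real K \<le> real N * (1/8 - d1 - d2)\<^sup>2 / (81 * real M * L * (1 + 2 * d2 / 3)) \<longrightarrow>
         unif_prob M N (\<lambda>C.
            17 * sqrt (real K * L * (1 + mu_I M N C) / real N) * spec_norm N (M * N) (Psi M N C)
            + 48 * mu_B M N C * L
            + 2 * real K / real N * (spec_norm N (M * N) (Psi M N C))\<^sup>2
            + 3 * mu_I M N C \<le> 1/4) \<ge> 1 - \<epsilon>)))"
proof (intro allI impI)
  fix eps :: real assume eps: "eps > 0"
  show "\<exists>N0. \<forall>N\<ge>N0. N > 0 \<longrightarrow> (\<forall>K::nat. K > 0 \<longrightarrow>
     (let L = ln (real M * real N);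
          d1 = 24 * sqrt ((real M - 1) / real N) * L * (2 * sqrt (L - ln eps) + 1);
          d2 = 3 / 2 * sqrt ((real M - 1) / real N) * (2 * sqrt (ln (2 * real M) - ln eps) + 1)
      in real K \<le> real N * (1/8 - d1 - d2)\<^sup>2 / (81 * real M * L * (1 + 2 * d2 / 3)) \<longrightarrow>
         unif_prob M N (\<lambda>C.
            17 * sqrt (real K * L * (1 + mu_I M N C) / real N) * spec_norm N (M * N) (Psi M N C)
            + 48 * mu_B M N C * L
            + 2 * real K / real N * (spec_norm N (M * N) (Psi M N C))\<^sup>2
            + 3 * mu_I M N C \<le> 1/4) \<ge> 1 - eps))"
  proof (cases "eps \<ge> 1")
    case True
    show ?thesis
    proof (rule exI[of _ 0], intro allI impI)
      fix N K :: nat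
      show "let L = ln (real M * real N);
          d1 = 24 * sqrt ((real M - 1) / real N) * L * (2 * sqrt (L - ln eps) + 1);
          d2 = 3 / 2 * sqrt ((real M - 1) / real N) * (2 * sqrt (ln (2 * real M) - ln eps) + 1)
      in real K \<le> real N * (1/8 - d1 - d2)\<^sup>2 / (81 * real M * L * (1 + 2 * d2 / 3)) \<longrightarrow>
         unif_prob M N (\<lambda>C.
            17 * sqrt (real K * L * (1 + mu_I M N C) / real N) * spec_norm N (M * N) (Psi M N C)
            + 48 * mu_B M N C * L
            + 2 * real K / real N * (spec_norm N (M * N) (Psi M N C))\<^sup>2
            + 3 * mu_I M N C \<le> 1/4) \<ge> 1 - eps"
        unfolding Let_def
      proof (intro impI)
        fix P :: "(nat \<Rightarrow> nat) \<Rightarrow> bool"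
        have "0 \<le> unif_prob M N (\<lambda>C.
            17 * sqrt (real K * ln (real M * real N) * (1 + mu_I M N C) / real N) * spec_norm N (M * N) (Psi M N C)
            + 48 * mu_B M N C * ln (real M * real N)
            + 2 * real K / real N * (spec_norm N (M * N) (Psi M N C))\<^sup>2
            + 3 * mu_I M N C \<le> 1/4)" by (rule unif_prob_nonneg)
        thus "1 - eps \<le> unif_prob M N (\<lambda>C.
            17 * sqrt (real K * ln (real M * real N) * (1 + mu_I M N C) / real N) * spec_norm N (M * N) (Psi M N C)
            + 48 * mu_B M N C * ln (real M * real N)
            + 2 * real K / real N * (spec_norm N (M * N) (Psi M N C))\<^sup>2
            + 3 * mu_I M N C \<le> 1/4)" using True by linarith
      qed
    qed
  next
    case False
    hence eps1: "eps < 1" by simp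
    have M1: "real M > 1" using assms by simp
    obtain N0 where H: "\<forall>N\<ge>N0.
     4 * (real M)^2 * (real N)^2 * exp (-((real N powr (2/3))\<^sup>2) / (2 * real N)) \<le> eps \<and>
     24 * sqrt ((real M - 1) / real N) * ln (real M * real N) * (2 * sqrt (ln (real M * real N) - ln eps) + 1) \<le> 1/10000 \<and>
     3 / 2 * sqrt ((real M - 1) / real N) * (2 * sqrt (ln (2 * real M) - ln eps) + 1) \<le> 1/10000 \<and>
     2 * real M * (real N powr (2/3)) / real N \<le> 1/10000 \<and>
     2 * real M * (real N powr (2/3)) / real N * ln (real M * real N) \<le> 1/10000 \<and>
     1 / ln (real M * real N) \<le> 1/10000 \<and> real N \<ge> 2"
      using asymp_facts[OF M1 eps, of "ln eps" "ln (2 * real M) - ln eps"] by blast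
    show ?thesis
    proof (rule exI[of _ N0], intro allI impI)
      fix N K :: nat assume N: "N \<ge> N0" "N > 0" and K: "K > 0"
      define L where "L = ln (real M * real N)"
      define d1 where "d1 = 24 * sqrt ((real M - 1) / real N) * L * (2 * sqrt (L - ln eps) + 1)"
      define d2 where "d2 = 3 / 2 * sqrt ((real M - 1) / real N) * (2 * sqrt (ln (2 * real M) - ln eps) + 1)"
      define e where "e = 2 * real M * (real N powr (2/3)) / real N"
      have h1: "4 * (real M)^2 * (real N)^2 * exp (-((real N powr (2/3))\<^sup>2) / (2 * real N)) \<le> eps"
        and h2: "d1 \<le> 1/10000" and h3: "d2 \<le> 1/10000" and h4: "e \<le> 1/10000"
        and h5: "e * L \<le> 1/10000" and h6: "1 / L \<le> 1/10000" and h7: "real N \<ge> 2"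
        using H N(1) unfolding d1_def d2_def e_def L_def by blast+
      have N2: "N \<ge> 2" using h7 by simp
      have mn: "(2::real) * 2 \<le> real M * real N" using assms N2 by (intro mult_mono) auto
      have L0: "L > 0" unfolding L_def using mn by (subst ln_gt_zero_iff) auto
      have lneps: "ln eps < 0" using eps eps1 by simp
      have d10: "0 \<le> d1"
      proof -
        have "0 \<le> sqrt (L - ln eps)" using L0 lneps by simp
        thus ?thesis unfolding d1_def using L0 assms by (intro mult_nonneg_nonneg) auto
      qed
      have d20: "0 \<le> d2"
      proof -
        have "0 \<le> ln (2 * real M)" using assms by simp
        hence "0 \<le> sqrt (ln (2 * real M) - ln eps)" using lneps by simp
        thus ?thesis unfolding d2_def using assms by (intro mult_nonneg_nonneg) auto
      qed
      have e0: "0 \<le> e" unfolding e_def by simp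
      show "let L = ln (real M * real N);
          d1 = 24 * sqrt ((real M - 1) / real N) * L * (2 * sqrt (L - ln eps) + 1);
          d2 = 3 / 2 * sqrt ((real M - 1) / real N) * (2 * sqrt (ln (2 * real M) - ln eps) + 1)
      in real K \<le> real N * (1/8 - d1 - d2)\<^sup>2 / (81 * real M * L * (1 + 2 * d2 / 3)) \<longrightarrow>
         unif_prob M N (\<lambda>C.
            17 * sqrt (real K * L * (1 + mu_I M N C) / real N) * spec_norm N (M * N) (Psi M N C)
            + 48 * mu_B M N C * L
            + 2 * real K / real N * (spec_norm N (M * N) (Psi M N C))\<^sup>2
            + 3 * mu_I M N C \<le> 1/4) \<ge> 1 - eps"
        unfolding Let_def L_def[symmetric] d1_def[symmetric] d2_def[symmetric]
      proof (intro impI)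
        assume Kb: "real K \<le> real N * (1/8 - d1 - d2)\<^sup>2 / (81 * real M * L * (1 + 2 * d2 / 3))"
        show "1 - eps \<le> unif_prob M N (\<lambda>C.
            17 * sqrt (real K * L * (1 + mu_I M N C) / real N) * spec_norm N (M * N) (Psi M N C)
            + 48 * mu_B M N C * L
            + 2 * real K / real N * (spec_norm N (M * N) (Psi M N C))\<^sup>2
            + 3 * mu_I M N C \<le> 1/4)"
        proof (rule main_prob[OF assms N2 h1])
          fix C
          assume mI: "mu_I M N C \<le> 2 * real M * (real N powr (2/3)) / real N"
            and mB: "mu_B M N C \<le> 2 * real M * (real N powr (2/3)) / real N"
            and S0: "0 \<le> spec_norm N (M * N) (Psi M N C)"
            and S1: "spec_norm N (M * N) (Psi M N C) \<le> sqrt (real M)"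
          show "17 * sqrt (real K * L * (1 + mu_I M N C) / real N) * spec_norm N (M * N) (Psi M N C)
            + 48 * mu_B M N C * L
            + 2 * real K / real N * (spec_norm N (M * N) (Psi M N C))\<^sup>2
            + 3 * mu_I M N C \<le> 1/4"
          proof (rule final_ineq)
            show "real N > 0" "real M > 0" "L > 0" "1 / L \<le> 1/10000" using N assms L0 h6 by auto
            show "0 \<le> d1" "d1 \<le> 1/10000" "0 \<le> d2" "d2 \<le> 1/10000" using d10 h2 d20 h3 by auto
            show "mu_I M N C \<le> e" "mu_B M N C \<le> e" using mI mB by (auto simp: e_def)
            show "0 \<le> e" "e \<le> 1/10000" "e * L \<le> 1/10000" using e0 h4 h5 by auto
            show "0 \<le> spec_norm N (M * N) (Psi M N C)" "spec_norm N (M * N) (Psi M N C) \<le> sqrt (real M)"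
              using S0 S1 by auto
            show "0 \<le> real K" by simp
            show "real K \<le> real N * (1/8 - d1 - d2)\<^sup>2 / (81 * real M * L * (1 + 2 * d2 / 3))" by (rule Kb)
          qed
        qed
      qed
    qed
  qed
qed

end
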